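(* Let $\mathcal R\subset\mathbb Z^k$ be a polyhedral region and let $n$ be a positive integer. Then $\mathcal R$ can be written as the union of a set of measure zero and a polyhedral region $\mathcal R'$ such that every $\vec z\in\mathcal R'$ lies in a $k$-dimensional box of size $n$ contained entirely in $\mathcal R$.
   Context: A half-space is $\{\vec z\in\mathbb Z^k:\vec v\cdot\vec z>m\}$ with $\vec v\in\mathbb Z^k$, $m\in\mathbb Z$; a polyhedral region is $\mathbb Z^k$ or an intersection of finitely many half-spaces. A hyperplane is $\{\vec z\in\mathbb Z^k:\vec v\cdot\vec z=m\}$ with $\vec v\in\mathbb Z^k\setminus\{0\}$, $m\in\mathbb Z$; a set of measure zero is a subset of $\mathbb Z^k$ covered by finitely many hyperplanes. A $k$-dimensional box of size $n$ is $\{\vec z\in\mathbb Z^k: c_i\le z_i\le c_i+n,\ i=1,\dots,k\}$ for some $c_i\in\mathbb Z$. *)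

theory Defs
  imports Main
begin

definition lattice :: "nat \<Rightarrow> int list set" where
  "lattice k = {z. length z = k}"

definition dotp :: "nat \<Rightarrow> int list \<Rightarrow> int list \<Rightarrow> int" where
  "dotp k v z = (\<Sum>i<k. v ! i * z ! i)"

definition halfspace :: "nat \<Rightarrow> int list \<Rightarrow> int \<Rightarrow> int list set" where
  "halfspace k v m = {z \<in> lattice k. dotp k v z > m}"

definition hyperplane :: "nat \<Rightarrow> int list \<Rightarrow> int \<Rightarrow> int list set" where
  "hyperplane k v m = {z \<in> lattice k. dotp k v z = m}"

definition polyhedral :: "nat \<Rightarrow> int list set \<Rightarrow> bool" where
  "polyhedral k R \<longleftrightarrow> R = lattice k \<or>
     (\<exists>H. H \<noteq> [] \<and> (\<forall>(v, m) \<in> set H. length v = k) \<and>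
          R = (\<Inter>(v, m) \<in> set H. halfspace k v m))"

definition measure_zero :: "nat \<Rightarrow> int list set \<Rightarrow> bool" where
  "measure_zero k S \<longleftrightarrow> S \<subseteq> lattice k \<and>
     (\<exists>H. (\<forall>(v, m) \<in> set H. length v = k \<and> v \<noteq> replicate k 0) \<and>
          S \<subseteq> (\<Union>(v, m) \<in> set H. hyperplane k v m))"

definition box :: "nat \<Rightarrow> nat \<Rightarrow> int list \<Rightarrow> int list set" where
  "box k n c = {z \<in> lattice k. \<forall>i<k. c ! i \<le> z ! i \<and> z ! i \<le> c ! i + int n}"

end

theory Submission
  imports Defs
begin

lemma coord_bound:
  fixes v z d :: int
  assumes "0 \<le> d" "d \<le> int n"
  shows "v * (z + d) \<ge> v * z - \<bar>v\<bar> * int n"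
proof (cases "v \<ge> 0")
  case True
  then have "v * d \<ge> 0" using assms by simp
  then show ?thesis using True by (simp add: algebra_simps)
next
  case False
  then have "v * d \<ge> v * int n" using assms by (simp add: mult_left_mono_neg)
  then show ?thesis using False by (simp add: algebra_simps)
qed

lemma dot_box:
  assumes "w \<in> box k n z"
  shows "dotp k v w \<ge> dotp k v z - int n * (\<Sum>i<k. \<bar>v ! i\<bar>)"
proof -
  have "\<And>i. i < k \<Longrightarrow> v ! i * w ! i \<ge> v ! i * z ! i - \<bar>v ! i\<bar> * int n"
  proof -
    fix i assume i: "i < k"
    have "0 \<le> w ! i - z ! i" "w ! i - z ! i \<le> int n" using assms i by (auto simp: box_def)
    from coord_bound[OF this, of "v ! i" "z ! i"] show "v ! i * w ! i \<ge> v ! i * z ! i - \<bar>v ! i\<bar> * int n"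
      by simp
  qed
  then have "(\<Sum>i<k. v ! i * w ! i) \<ge> (\<Sum>i<k. v ! i * z ! i - \<bar>v ! i\<bar> * int n)"
    by (intro sum_mono) auto
  then show ?thesis by (simp add: dotp_def sum_subtractf sum_distrib_left sum_distrib_right mult.commute)
qed

theorem mainTheorem19:
  fixes k n :: nat and R :: "int list set"
  assumes "polyhedral k R" and "n > 0"
  shows "\<exists>S R'. measure_zero k S \<and> polyhedral k R' \<and> R = S \<union> R' \<and>
           (\<forall>z \<in> R'. \<exists>c. length c = k \<and> z \<in> box k n c \<and> box k n c \<subseteq> R)"
proof (cases "R = lattice k")
  case True
  show ?thesis
  proof (intro exI conjI)
    show "measure_zero k {}" unfolding measure_zero_def by (intro conjI exI[of _ "[]"]) auto
    show "polyhedral k R" using True by (simp add: polyhedral_def)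
    show "R = {} \<union> R" by simp
    show "\<forall>z\<in>R. \<exists>c. length c = k \<and> z \<in> box k n c \<and> box k n c \<subseteq> R"
      using True by (auto simp: box_def lattice_def)
  qed
next
  case False
  then obtain H where H: "H \<noteq> []" "\<forall>(v, m) \<in> set H. length v = k"
    "R = (\<Inter>(v, m) \<in> set H. halfspace k v m)"
    using assms(1) by (auto simp: polyhedral_def)
  define C where "C v = int n * (\<Sum>i<k. \<bar>v ! i\<bar>)" for v :: "int list"
  define H' where "H' = map (\<lambda>(v,m). (v, m + C v)) H"
  define HS where "HS = concat (map (\<lambda>(v,m). map (\<lambda>t. (v,t)) [m+1..m + C v]) H)"
  define R' where "R' = (\<Inter>(v, m) \<in> set H'. halfspace k v m)"
  have C0: "C v \<ge> 0" for v unfolding C_def by simp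
  have R'R: "R' \<subseteq> R"
  proof
    fix z assume "z \<in> R'"
    show "z \<in> R" unfolding H(3)
    proof (rule INT_I)
      fix p assume p: "p \<in> set H"
      obtain v m where vm: "p = (v, m)" by force
      have "(v, m + C v) \<in> set H'" using p vm by (force simp: H'_def)
      then have "z \<in> halfspace k v (m + C v)" using \<open>z \<in> R'\<close> unfolding R'_def by force
      then show "z \<in> (case p of (v, m) \<Rightarrow> halfspace k v m)"
        using C0[of v] by (auto simp: vm halfspace_def)
    qed
  qed
  show ?thesis
  proof (intro exI conjI)
    show "polyhedral k R'" unfolding polyhedral_def R'_def
      using H(1,2) by (intro disjI2 exI[of _ H']) (auto simp: H'_def)
    show "R = (R - R') \<union> R'" using R'R by blast
    show "\<forall>z\<in>R'. \<exists>c. length c = k \<and> z \<in> box k n c \<and> box k n c \<subseteq> R"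
    proof
      fix z assume z: "z \<in> R'"
      have zl: "z \<in> lattice k"
        using z H(1) unfolding R'_def H'_def halfspace_def by (cases H) auto
      have "box k n z \<subseteq> R"
      proof
        fix w assume w: "w \<in> box k n z"
        show "w \<in> R" unfolding H(3)
        proof (rule INT_I)
          fix p assume p: "p \<in> set H"
          obtain v m where vm: "p = (v, m)" by force
          have "(v, m + C v) \<in> set H'" using p vm by (force simp: H'_def)
          then have "dotp k v z > m + C v" using z unfolding R'_def halfspace_def by force
          moreover have "dotp k v w \<ge> dotp k v z - C v" using dot_box[OF w] by (simp add: C_def)
          moreover have "w \<in> lattice k" using w by (simp add: box_def)
          ultimately show "w \<in> (case p of (v, m) \<Rightarrow> halfspace k v m)"
            by (simp add: vm halfspace_def)
        qed
      qed
      moreover have "z \<in> box k n z" using zl by (simp add: box_def)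
      moreover have "length z = k" using zl by (simp add: lattice_def)
      ultimately show "\<exists>c. length c = k \<and> z \<in> box k n c \<and> box k n c \<subseteq> R" by blast
    qed
    show "measure_zero k (R - R')"
      unfolding measure_zero_def
    proof (intro conjI exI[of _ HS])
      show "R - R' \<subseteq> lattice k" using H(1) unfolding H(3) halfspace_def by (cases H) auto
      show "\<forall>(v, m)\<in>set HS. length v = k \<and> v \<noteq> replicate k 0"
      proof (clarify)
        fix v t assume "(v, t) \<in> set HS"
        then obtain m where vm: "(v, m) \<in> set H" "m + 1 \<le> t" "t \<le> m + C v"
          by (auto simp: HS_def)
        have lv: "length v = k" using vm H(2) by auto
        moreover have "v \<noteq> replicate k 0"
        proof
          assume "v = replicate k 0"
          then have "C v = 0" by (simp add: C_def)
          with vm show False by simp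
        qed
        ultimately show "length v = k \<and> v \<noteq> replicate k 0" by simp
      qed
      show "R - R' \<subseteq> (\<Union>(v, m)\<in>set HS. hyperplane k v m)"
      proof
        fix z assume z: "z \<in> R - R'"
        then obtain p where p: "p \<in> set H'" "z \<notin> (case p of (v, m) \<Rightarrow> halfspace k v m)"
          unfolding R'_def by blast
        then obtain v m where vm: "(v, m) \<in> set H" "p = (v, m + C v)" by (auto simp: H'_def)
        have zl: "z \<in> lattice k" and gt: "dotp k v z > m"
          using z vm(1) unfolding H(3) halfspace_def by auto
        have le: "dotp k v z \<le> m + C v" using p(2) zl vm(2) by (auto simp: halfspace_def)
        have "(v, dotp k v z) \<in> set HS" using vm(1) gt le by (force simp: HS_def)
        then show "z \<in> (\<Union>(v, m)\<in>set HS. hyperplane k v m)"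
          using zl by (force simp: hyperplane_def)
      qed
    qed
  qed
qed

end
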